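(* Fix $a>0$. Then there exist, for all sufficiently large real $c>0$, complex numbers $z^*_c$ satisfying ${}_1F_1(a;c;z^*_c)=0$ and $\lim_{c\to\infty} z^*_c/c = 1$.
   Context: ${}_1F_1(a;c;z)=\sum_{k=0}^\infty \frac{(a)_k}{(c)_k}\frac{z^k}{k!}$ denotes Kummer's confluent hypergeometric function (an entire function of $z$ for $c>0$), where $(x)_k=\Gamma(x+k)/\Gamma(x)$ is the Pochhammer symbol. *)

theory Defs
  imports "HOL-Analysis.Analysis"
begin

text \<open>Kummer's confluent hypergeometric function 1F1(a;c;z) as its power series
  (real parameters a, c; complex argument z). For c > 0 the series converges for all z.\<close>
definition hyp1F1 :: "real \<Rightarrow> real \<Rightarrow> complex \<Rightarrow> complex" where
  "hyp1F1 a c z =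
     (\<Sum>k. pochhammer (complex_of_real a) k / pochhammer (complex_of_real c) k
            * z ^ k / fact k)"

end

theory Submission
  imports Defs "HOL-Complex_Analysis.Complex_Analysis" "HOL-Real_Asymp.Real_Asymp"
begin


lemma poch_le_poch:
  fixes a c :: real
  assumes "0 \<le> a" "a \<le> c"
  shows "pochhammer a k \<le> pochhammer c k"
  unfolding pochhammer_prod using assms by (intro prod_mono) auto

lemma poch_ratio:
  fixes a c :: real
  assumes "0 < a" "a \<le> c"
  shows "0 < pochhammer a k / pochhammer c k" "pochhammer a k / pochhammer c k \<le> 1"
proof -
  have "0 < pochhammer a k" "0 < pochhammer c k" using assms by (auto intro!: pochhammer_pos)
  then show "0 < pochhammer a k / pochhammer c k" by simp
  show "pochhammer a k / pochhammer c k \<le> 1"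
    using poch_le_poch[of a c k] assms \<open>0 < pochhammer c k\<close> by simp
qed

lemma term_norm:
  fixes a c :: real
  assumes "0 < a" "0 < c"
  shows "norm (pochhammer (complex_of_real a) k / pochhammer (complex_of_real c) k * z ^ k / fact k)
     = pochhammer a k / pochhammer c k * norm z ^ k / fact k"
proof -
  have "0 < pochhammer a k" "0 < pochhammer c k" using assms by (auto intro!: pochhammer_pos)
  then show ?thesis
    by (simp add: pochhammer_of_real norm_mult norm_divide norm_power del: of_real_divide)
qed

lemma term_summable:
  fixes a c :: real
  assumes "0 < a" "a \<le> c"
  shows "summable (\<lambda>k. norm (pochhammer (complex_of_real a) k / pochhammer (complex_of_real c) k * z ^ k / fact k))"
proof (rule summable_comparison_test[OF _ summable_exp_generic[of "norm z"]])
  show "\<exists>N. \<forall>n\<ge>N. norm (norm (pochhammer (complex_of_real a) n / pochhammer (complex_of_real c) n * z ^ n / fact n))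
     \<le> norm z ^ n /\<^sub>R fact n"
  proof (intro exI allI impI)
    fix n :: nat
    have "pochhammer a n / pochhammer c n * norm z ^ n / fact n \<le> 1 * norm z ^ n / fact n"
      using poch_ratio[OF assms, of n] by (intro divide_right_mono mult_right_mono) auto
    moreover have "norm z ^ n /\<^sub>R fact n = norm z ^ n / fact n" by (simp add: divide_inverse_commute)
    ultimately show "norm (norm (pochhammer (complex_of_real a) n / pochhammer (complex_of_real c) n * z ^ n / fact n))
     \<le> norm z ^ n /\<^sub>R fact n"
      using term_norm[of a c n z] assms pochhammer_pos[of a n] pochhammer_pos[of c n] by (simp add: abs_mult)
  qed
qed

lemma hyp_bound:
  fixes a c :: real
  assumes "0 < a" "a \<le> c"
  shows "norm (hyp1F1 a c z) \<le> exp (norm z)"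
proof -
  have s: "summable (\<lambda>k. norm (pochhammer (complex_of_real a) k / pochhammer (complex_of_real c) k * z ^ k / fact k))"
    by (rule term_summable[OF assms])
  have "norm (hyp1F1 a c z) \<le> (\<Sum>k. norm (pochhammer (complex_of_real a) k / pochhammer (complex_of_real c) k * z ^ k / fact k))"
    unfolding hyp1F1_def by (rule summable_norm[OF s])
  also have "\<dots> \<le> (\<Sum>k. norm z ^ k /\<^sub>R fact k)"
  proof (rule suminf_le[OF _ s summable_exp_generic])
    fix n
    have "pochhammer a n / pochhammer c n * norm z ^ n / fact n \<le> 1 * norm z ^ n / fact n"
      using poch_ratio[OF assms, of n] by (intro divide_right_mono mult_right_mono) auto
    moreover have "norm z ^ n /\<^sub>R fact n = norm z ^ n / fact n" by (simp add: divide_inverse_commute)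
    ultimately show "norm (pochhammer (complex_of_real a) n / pochhammer (complex_of_real c) n * z ^ n / fact n)
     \<le> norm z ^ n /\<^sub>R fact n"
      using term_norm[of a c n z] assms by simp
  qed
  also have "\<dots> = exp (norm z)" by (simp add: exp_def)
  finally show ?thesis .
qed

lemma hyp_real:
  fixes a c x :: real
  assumes "0 < a" "a \<le> c"
  shows "hyp1F1 a c (complex_of_real x) = complex_of_real (\<Sum>k. pochhammer a k / pochhammer c k * x ^ k / fact k)"
proof -
  have s: "summable (\<lambda>k. pochhammer a k / pochhammer c k * x ^ k / fact k)"
  proof (rule summable_norm_cancel)
    show "summable (\<lambda>k. norm (pochhammer a k / pochhammer c k * x ^ k / fact k))"
    proof -
      have "norm (pochhammer a k / pochhammer c k * x ^ k / fact k)
          = norm (pochhammer (complex_of_real a) k / pochhammer (complex_of_real c) k * (complex_of_real x) ^ k / fact k)" for k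
      proof -
        have "0 < pochhammer a k" "0 < pochhammer c k" using assms by (auto intro!: pochhammer_pos)
        then show ?thesis unfolding term_norm[OF assms(1) order.strict_trans2[OF assms]]
          by (simp add: abs_mult power_abs)
      qed
      then show ?thesis using term_summable[OF assms, of "of_real x"] by simp
    qed
  qed
  show ?thesis
    unfolding hyp1F1_def suminf_of_real[OF s]
    by (simp add: pochhammer_of_real)
qed

lemma hyp_holo:
  fixes a c :: real
  assumes "0 < a" "a \<le> c"
  shows "hyp1F1 a c holomorphic_on UNIV"
proof -
  define co where "co k = pochhammer (complex_of_real a) k / pochhammer (complex_of_real c) k / fact k" for k
  have eq: "hyp1F1 a c = (\<lambda>z. \<Sum>k. co k * z ^ k)"
    by (auto simp: hyp1F1_def co_def fun_eq_iff)
  have s: "summable (\<lambda>k. co k * y ^ k)" for y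
    using summable_norm_cancel[OF term_summable[OF assms, of y]] by (simp add: co_def)
  show ?thesis unfolding eq holomorphic_on_def
    using termdiffs_strong_converges_everywhere[OF s]
    by (meson field_differentiable_at_within field_differentiable_def)
qed




definition Rs :: "real \<Rightarrow> real \<Rightarrow> real \<Rightarrow> real" where
  "Rs a c y = (\<Sum>k. pochhammer a k / pochhammer c k * y ^ k / fact k)"

lemma Rs_summable:
  fixes a c y :: real
  assumes "0 < a" "a \<le> c"
  shows "summable (\<lambda>k. pochhammer a k / pochhammer c k * y ^ k / fact k)"
proof (rule summable_norm_cancel)
  have "norm (pochhammer a k / pochhammer c k * y ^ k / fact k)
      = norm (pochhammer (complex_of_real a) k / pochhammer (complex_of_real c) k * (complex_of_real y) ^ k / fact k)" for k
  proof -
    have "0 < pochhammer a k" "0 < pochhammer c k" using assms by (auto intro!: pochhammer_pos)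
    then show ?thesis unfolding term_norm[OF assms(1) order.strict_trans2[OF assms]]
      by (simp add: abs_mult power_abs)
  qed
  then show "summable (\<lambda>k. norm (pochhammer a k / pochhammer c k * y ^ k / fact k))"
    using term_summable[OF assms, of "of_real y"] by simp
qed

lemma Rs_term_le:
  fixes a c y :: real
  assumes "0 < a" "a \<le> c" "0 \<le> y"
  shows "pochhammer a K / pochhammer c K * y ^ K / fact K \<le> Rs a c y"
proof -
  have "sum (\<lambda>k. pochhammer a k / pochhammer c k * y ^ k / fact k) {K} \<le> Rs a c y"
    unfolding Rs_def
  proof (intro sum_le_suminf[OF Rs_summable[OF assms(1,2)]])
    fix n
    have "0 < pochhammer a n" "0 < pochhammer c n" using assms by (auto intro!: pochhammer_pos)
    then show "0 \<le> pochhammer a n / pochhammer c n * y ^ n / fact n" using assms by simp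
  qed auto
  then show ?thesis by simp
qed

lemma Rs_ge1:
  fixes a c y :: real
  assumes "0 < a" "a \<le> c" "0 \<le> y"
  shows "1 \<le> Rs a c y"
  using Rs_term_le[OF assms, of 0] by simp

lemma poch_ge_pow:
  fixes c :: real
  assumes "0 \<le> c"
  shows "c ^ k \<le> pochhammer c k"
proof -
  have "c ^ k = prod (\<lambda>_. c) {0..<k}" by simp
  also have "\<dots> \<le> prod (\<lambda>i. c + of_nat i) {0..<k}" using assms by (intro prod_mono) auto
  finally show ?thesis by (simp add: pochhammer_prod)
qed

lemma poch_le_pow:
  fixes c :: real
  assumes "0 \<le> c"
  shows "pochhammer c k \<le> (c + of_nat k) ^ k"
proof -
  have "pochhammer c k = prod (\<lambda>i. c + of_nat i) {0..<k}" by (simp add: pochhammer_prod)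
  also have "\<dots> \<le> prod (\<lambda>_. c + of_nat k) {0..<k}" using assms by (intro prod_mono) auto
  finally show ?thesis by simp
qed

lemma B_summable:
  fixes a x :: real
  assumes "0 < a" "0 \<le> x" "x < 1"
  shows "summable (\<lambda>k. pochhammer a k * x ^ k / fact k)"
proof (rule summable_ratio_test[of "(1 + x) / 2" "nat \<lceil>2 * a / (1 - x)\<rceil>"])
  show "(1 + x) / 2 < 1" using assms by simp
  fix n assume n: "nat \<lceil>2 * a / (1 - x)\<rceil> \<le> n"
  then have "2 * a / (1 - x) \<le> real n" by linarith
  then have n2: "2 * a \<le> real n * (1 - x)" using assms by (simp add: field_simps)
  have key: "(a + real n) * x \<le> (1 + x) / 2 * (real n + 1)"
  proof -
    have "a * x \<le> a" using assms by (simp add: mult_left_le)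
    then have "(a + real n) * x \<le> a + real n * x" by (simp add: algebra_simps)
    also have "\<dots> \<le> (real n - real n * x)/2 + real n * x" using n2 by (simp add: algebra_simps)
    also have "\<dots> \<le> (1 + x) / 2 * (real n + 1)" using assms by (simp add: field_simps)
    finally show ?thesis .
  qed
  have pos: "0 < pochhammer a n" using assms by (simp add: pochhammer_pos)
  have "norm (pochhammer a (Suc n) * x ^ Suc n / fact (Suc n))
      = (pochhammer a n * x ^ n / fact n) * ((a + real n) * x / (real n + 1))"
    using pos assms by (simp add: pochhammer_Suc abs_mult field_simps)
  also have "\<dots> \<le> (pochhammer a n * x ^ n / fact n) * ((1 + x) / 2)"
    using key pos assms by (intro mult_left_mono) (auto simp: field_simps)
  also have "\<dots> = (1 + x) / 2 * norm (pochhammer a n * x ^ n / fact n)"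
    using pos assms by (simp add: abs_mult mult_ac)
  finally show "norm (pochhammer a (Suc n) * x ^ Suc n / fact (Suc n)) \<le> (1 + x) / 2 * norm (pochhammer a n * x ^ n / fact n)" .
qed

lemma Rs_upper:
  fixes a c x :: real
  assumes "0 < a" "a \<le> c" "0 \<le> x" "x < 1"
  shows "Rs a c (c * x) \<le> (\<Sum>k. pochhammer a k * x ^ k / fact k)"
  unfolding Rs_def
proof (rule suminf_le[OF _ Rs_summable[OF assms(1,2)] B_summable[OF assms(1,3,4)]])
  fix k
  have c0: "0 < c" using assms by simp
  have p: "0 < pochhammer a k" "0 < pochhammer c k" using assms by (auto intro!: pochhammer_pos)
  have "pochhammer a k / pochhammer c k * (c * x) ^ k = pochhammer a k * x ^ k * (c ^ k / pochhammer c k)"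
    by (simp add: power_mult_distrib)
  also have "\<dots> \<le> pochhammer a k * x ^ k * 1"
    using p poch_ge_pow[of c k] c0 assms by (intro mult_left_mono) auto
  finally have "pochhammer a k / pochhammer c k * (c * x) ^ k \<le> pochhammer a k * x ^ k" by simp
  then show "pochhammer a k / pochhammer c k * (c * x) ^ k / fact k \<le> pochhammer a k * x ^ k / fact k"
    by (intro divide_right_mono) auto
qed




lemma Rs_lower:
  fixes a t :: real
  assumes a: "0 < a" and t: "0 < t" "t \<le> 1"
  shows "\<exists>\<delta>>0. eventually (\<lambda>c. exp (c * \<delta>) \<le> Rs a c (c * (1 + 2 * t))) at_top"
proof -
  define q where "q = (1 + 2 * t) / (1 + t)"
  have q1: "1 < q" using t by (simp add: q_def field_simps)
  define L where "L = ln q"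
  have L: "0 < L" using q1 by (simp add: L_def)
  have ev1: "eventually (\<lambda>c. c * (t * L / 2) \<le> ln a - ln (t * c) + (t * c - 1) * L) at_top"
    using a t L by real_asymp
  have ev2: "eventually (\<lambda>c. max a (1 / t) \<le> c) at_top" by (rule eventually_ge_at_top)
  have "eventually (\<lambda>c. exp (c * (t * L / 2)) \<le> Rs a c (c * (1 + 2 * t))) at_top"
    using ev1 ev2
  proof eventually_elim
    case (elim c)
    have ac: "a \<le> c" and tc: "1 \<le> t * c" using elim(2) t by (auto simp: field_simps)
    have c0: "0 < c" using ac a by simp
    define K where "K = nat \<lfloor>t * c\<rfloor>"
    have K1: "real K \<le> t * c" "t * c - 1 \<le> real K" "1 \<le> K" using tc by (auto simp: K_def) linarith+
    then obtain m where m: "K = Suc m" by (cases K) auto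
    have pa: "a * fact m \<le> pochhammer a K"
    proof -
      have "pochhammer 1 m \<le> pochhammer (a + 1) m" using a by (intro poch_le_poch) auto
      then show ?thesis using a by (simp add: m pochhammer_rec pochhammer_fact)
    qed
    have pc: "pochhammer c K \<le> (c * (1 + t)) ^ K"
    proof -
      have "pochhammer c K \<le> (c + real K) ^ K" using c0 by (intro poch_le_pow) auto
      also have "\<dots> \<le> (c * (1 + t)) ^ K" using K1 c0 by (intro power_mono) (auto simp: algebra_simps)
      finally show ?thesis .
    qed
    have pcpos: "0 < pochhammer c K" using c0 by (simp add: pochhammer_pos)
    have pK: "(0::real) < fact K" by simp
    have "(a / real K) * q ^ K = (a * fact m / fact K) * ((c * (1 + 2 * t)) ^ K / (c * (1 + t)) ^ K)"
    proof -
      have "(c * (1 + 2 * t)) ^ K / (c * (1 + t)) ^ K = q ^ K"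
        unfolding q_def power_divide[symmetric] using c0 by simp
      moreover have "a * fact m / fact K = a / real K" by (simp add: m)
      ultimately show ?thesis by simp
    qed
    also have "\<dots> \<le> (pochhammer a K / fact K) * ((c * (1 + 2 * t)) ^ K / pochhammer c K)"
    proof (intro mult_mono divide_right_mono divide_left_mono pa pc)
    qed (use c0 t pcpos a pochhammer_pos[of a K] in auto)
    also have "\<dots> = pochhammer a K / pochhammer c K * (c * (1 + 2 * t)) ^ K / fact K" by simp
    also have "\<dots> \<le> Rs a c (c * (1 + 2 * t))"
      using c0 t a ac by (intro Rs_term_le) auto
    finally have low: "(a / real K) * q ^ K \<le> Rs a c (c * (1 + 2 * t))" .
    have "c * (t * L / 2) \<le> ln a - ln (t * c) + (t * c - 1) * L" by (rule elim(1))
    also have "\<dots> \<le> ln a - ln (real K) + real K * L"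
    proof -
      have "ln (real K) \<le> ln (t * c)" using K1 by simp
      moreover have "(t * c - 1) * L \<le> real K * L" using K1 L by (intro mult_right_mono) auto
      ultimately show ?thesis by linarith
    qed
    also have "\<dots> = ln ((a / real K) * q ^ K)"
      using a K1 q1 by (simp add: ln_mult ln_div ln_realpow L_def)
    finally have le: "c * (t * L / 2) \<le> ln ((a / real K) * q ^ K)" .
    have pos: "0 < (a / real K) * q ^ K" using a K1 q1 by simp
    have "exp (c * (t * L / 2)) \<le> exp (ln ((a / real K) * q ^ K))"
      using le by (simp only: exp_le_cancel_iff)
    also have "exp (ln ((a / real K) * q ^ K)) = (a / real K) * q ^ K" using pos by (rule exp_ln)
    finally have "exp (c * (t * L / 2)) \<le> (a / real K) * q ^ K" .
    then show ?case using low by linarith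
  qed
  then show ?thesis using t L by (intro exI[of _ "t * L / 2"]) auto
qed




lemma hyp_comp_holo:
  fixes a c :: real
  assumes "0 < a" "a \<le> c"
  shows "(\<lambda>w. hyp1F1 a c (complex_of_real c * w)) holomorphic_on S"
proof -
  have "(hyp1F1 a c \<circ> (\<lambda>w. complex_of_real c * w)) holomorphic_on S"
    by (rule holomorphic_on_compose) (auto intro: holomorphic_intros holomorphic_on_subset[OF hyp_holo[OF assms]])
  then show ?thesis by (simp add: o_def)
qed

lemma core:
  fixes a \<epsilon> :: real
  assumes a: "0 < a" and e: "0 < \<epsilon>" "\<epsilon> \<le> 1/2"
  shows "eventually (\<lambda>c. \<exists>z. hyp1F1 a c z = 0 \<and> cmod (z / complex_of_real c - 1) < \<epsilon>) at_top"
proof (rule ccontr)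
  assume nev: "\<not> ?thesis"
  obtain \<delta> where \<delta>: "\<delta> > 0" and ev\<delta>: "eventually (\<lambda>c. exp (c * \<delta>) \<le> Rs a c (c * (1 + 2 * (\<epsilon>/4)))) at_top"
    using Rs_lower[OF a, of "\<epsilon>/4"] e by auto
  define P where "P c \<longleftrightarrow> (\<forall>z. cmod (z / complex_of_real c - 1) < \<epsilon> \<longrightarrow> hyp1F1 a c z \<noteq> 0)
      \<and> exp (c * \<delta>) \<le> Rs a c (c * (1 + 2 * (\<epsilon>/4))) \<and> max a 1 \<le> c" for c
  have "\<exists>c\<ge>real n. P c" for n
  proof (rule ccontr)
    assume "\<not> (\<exists>c\<ge>real n. P c)"
    then have "eventually (\<lambda>c. \<not> P c) at_top"
      by (auto simp: eventually_at_top_linorder)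
    moreover have "eventually (\<lambda>c. exp (c * \<delta>) \<le> Rs a c (c * (1 + 2 * (\<epsilon>/4))) \<and> max a 1 \<le> c) at_top"
      using ev\<delta> eventually_ge_at_top by (rule eventually_conj)
    ultimately have "eventually (\<lambda>c. \<exists>z. hyp1F1 a c z = 0 \<and> cmod (z / complex_of_real c - 1) < \<epsilon>) at_top"
      by eventually_elim (auto simp: P_def)
    with nev show False by contradiction
  qed
  then obtain cs where cs: "\<And>n. real n \<le> cs n" "\<And>n. P (cs n)" by metis
  have csa: "a \<le> cs n" "1 \<le> cs n" for n using cs(2)[of n] by (auto simp: P_def)
  have cs0: "0 < cs n" for n using csa(2)[of n] by simp
  define \<Omega> where "\<Omega> = ball (1::complex) \<epsilon>"
  define F where "F n w = hyp1F1 a (cs n) (complex_of_real (cs n) * w)" for n w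
  have holF: "F n holomorphic_on S" for n S
    unfolding F_def by (rule hyp_comp_holo[OF a csa(1)])
  have nzF: "F n w \<noteq> 0" if "w \<in> \<Omega>" for n w
  proof -
    have "cmod (complex_of_real (cs n) * w / complex_of_real (cs n) - 1) < \<epsilon>"
      using that cs0[of n] by (simp add: \<Omega>_def dist_norm norm_minus_commute)
    then show ?thesis using cs(2)[of n] unfolding P_def F_def by blast
  qed
  have "\<exists>g. g holomorphic_on \<Omega> \<and> (\<forall>w\<in>\<Omega>. F n w = exp (g w))" for n
  proof -
    obtain g where "g holomorphic_on \<Omega>" "\<And>w. w \<in> \<Omega> \<Longrightarrow> F n w = exp (g w)"
      using contractible_imp_holomorphic_log[OF holF convex_imp_contractible nzF, of \<Omega> n]
      by (auto simp: \<Omega>_def)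
    then show ?thesis by blast
  qed
  then obtain g where holg: "\<And>n. g n holomorphic_on \<Omega>" and Fg: "\<And>n w. w \<in> \<Omega> \<Longrightarrow> F n w = exp (g n w)"
    by metis
  define I where "I = {1 - \<epsilon>/2 .. 1 - \<epsilon>/4}"
  have IO: "complex_of_real r \<in> \<Omega>" if "r \<in> I" for r
  proof -
    have "dist 1 (complex_of_real r) = \<bar>1 - r\<bar>"
      by (metis dist_complex_def dist_real_def norm_of_real of_real_1 of_real_diff)
    then show ?thesis using that e by (auto simp: \<Omega>_def I_def)
  qed
  define Rv where "Rv n r = Rs a (cs n) (cs n * r)" for n r
  have FR: "F n (complex_of_real r) = complex_of_real (Rv n r)" for n r
    unfolding F_def Rv_def Rs_def using hyp_real[OF a csa(1), of n "cs n * r"] by simp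
  have Rv1: "1 \<le> Rv n r" if "0 \<le> r" for n r
    unfolding Rv_def using that cs0[of n] by (intro Rs_ge1[OF a csa(1)]) auto
  have I0: "0 \<le> r" "r < 1" if "r \<in> I" for r using that e by (auto simp: I_def)
  define \<phi> where "\<phi> n r = g n (complex_of_real r) - complex_of_real (ln (Rv n r))" for n r
  have exp\<phi>: "exp (\<phi> n r) = 1" if "r \<in> I" for n r
  proof -
    have "exp (g n (complex_of_real r)) = complex_of_real (Rv n r)"
      using Fg[OF IO[OF that], of n] FR[of n r] by simp
    moreover have "exp (complex_of_real (ln (Rv n r))) = complex_of_real (Rv n r)"
      using Rv1[OF I0(1)[OF that], of n] by (simp add: exp_of_real)
    moreover have "complex_of_real (Rv n r) \<noteq> 0" using Rv1[OF I0(1)[OF that], of n] by simp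
    ultimately show ?thesis by (simp add: \<phi>_def exp_diff)
  qed
  have "\<phi> n constant_on I" for n
  proof (rule continuous_discrete_range_constant)
    show "connected I" by (simp add: I_def)
    have cF: "continuous_on I (\<lambda>r. F n (complex_of_real r))"
      by (intro continuous_on_compose2[OF holomorphic_on_imp_continuous_on[OF holF[of n UNIV]]] continuous_intros) auto
    have cg: "continuous_on I (\<lambda>r. g n (complex_of_real r))"
      by (intro continuous_on_compose2[OF holomorphic_on_imp_continuous_on[OF holg[of n]]] continuous_intros) (auto intro: IO)
    have eqR: "Rv n r = Re (F n (complex_of_real r))" for r by (simp add: FR)
    have cR: "continuous_on I (\<lambda>r. ln (Rv n r))"
      unfolding eqR
    proof (intro continuous_intros cF ballI)
      fix r assume "r \<in> I"
      then have "1 \<le> Rv n r" using Rv1 I0 by blast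
      then show "Re (F n (complex_of_real r)) \<noteq> 0" by (simp add: FR)
    qed
    show "continuous_on I (\<phi> n)"
      unfolding \<phi>_def by (intro continuous_intros cg cR)
    fix x assume x: "x \<in> I"
    show "\<exists>e>0. \<forall>y. y \<in> I \<and> \<phi> n y \<noteq> \<phi> n x \<longrightarrow> e \<le> norm (\<phi> n y - \<phi> n x)"
    proof (intro exI[of _ "2 * pi"] conjI allI impI)
      fix y assume y: "y \<in> I \<and> \<phi> n y \<noteq> \<phi> n x"
      have "exp (\<phi> n y - \<phi> n x) = 1" using exp\<phi>[of x n] exp\<phi>[of y n] x y by (simp add: exp_diff)
      then obtain k :: int where k: "Re (\<phi> n y - \<phi> n x) = 0" "Im (\<phi> n y - \<phi> n x) = of_int (2 * k) * pi"
        by (auto simp: exp_eq_1)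
      have "k \<noteq> 0" using k y by (auto simp: complex_eq_iff)
      then have "1 \<le> \<bar>real_of_int k\<bar>" by linarith
      then have "2 * pi \<le> \<bar>Im (\<phi> n y - \<phi> n x)\<bar>" using k pi_gt_zero by (simp add: abs_mult)
      also have "\<dots> \<le> norm (\<phi> n y - \<phi> n x)" by (rule abs_Im_le_cmod)
      finally show "2 * pi \<le> norm (\<phi> n y - \<phi> n x)" .
    qed simp
  qed
  then obtain \<kappa> where \<kappa>: "\<And>n r. r \<in> I \<Longrightarrow> \<phi> n r = \<kappa> n"
    unfolding constant_on_def by metis
  have Ine: "1 - \<epsilon>/2 \<in> I" using e by (auto simp: I_def)
  have exp\<kappa>: "exp (\<kappa> n) = 1" for n using exp\<phi>[OF Ine, of n] \<kappa>[OF Ine, of n] by simp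
  define G where "G n w = g n w - \<kappa> n" for n w
  have FG: "F n w = exp (G n w)" if "w \<in> \<Omega>" for n w
    using Fg[OF that, of n] exp\<kappa>[of n] by (simp add: G_def exp_diff)
  have GI: "G n (complex_of_real r) = complex_of_real (ln (Rv n r))" if "r \<in> I" for n r
    using \<kappa>[OF that, of n] by (auto simp: G_def \<phi>_def algebra_simps)
  define H where "H n w = exp (G n w / complex_of_real (cs n))" for n w
  have holG: "G n holomorphic_on \<Omega>" for n unfolding G_def by (intro holomorphic_intros holg)
  have holH: "H n holomorphic_on \<Omega>" for n
    unfolding H_def using cs0[of n] by (intro holomorphic_intros holG) auto
  have normH: "norm (H n w) = exp (Re (G n w) / cs n)" for n w
    by (simp add: H_def)
  have ReG: "exp (Re (G n w)) = norm (F n w)" if "w \<in> \<Omega>" for n w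
    using FG[OF that, of n] by simp
  have Hbound: "norm (H n w) \<le> exp 2" if "w \<in> \<Omega>" for n w
  proof -
    have "exp (Re (G n w)) \<le> exp (norm (complex_of_real (cs n) * w))"
      unfolding ReG[OF that] F_def by (rule hyp_bound[OF a csa(1)])
    then have "Re (G n w) \<le> cs n * norm w" using cs0[of n] by (simp add: norm_mult)
    then have "Re (G n w) / cs n \<le> norm w" using cs0[of n] by (simp add: field_simps)
    moreover have "norm w \<le> 2"
    proof -
      have "norm w \<le> norm (1::complex) + norm (w - 1)" by (metis add.commute diff_add_cancel norm_triangle_ineq)
      moreover have "norm (w - 1) < \<epsilon>" using that by (simp add: \<Omega>_def dist_norm norm_minus_commute)
      ultimately show ?thesis using e by simp
    qed
    ultimately show ?thesis unfolding normH by simp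
  qed
  obtain h r where holh: "h holomorphic_on \<Omega>" and r: "strict_mono (r :: nat \<Rightarrow> nat)"
    and lim: "\<And>x. x \<in> \<Omega> \<Longrightarrow> ((\<lambda>n. H (r n) x) \<longlongrightarrow> h x) sequentially"
  proof (rule Montel[of \<Omega> "range H" H])
    show "open \<Omega>" by (simp add: \<Omega>_def)
    show "\<And>h. h \<in> range H \<Longrightarrow> h holomorphic_on \<Omega>" using holH by auto
    show "\<And>K. compact K \<Longrightarrow> K \<subseteq> \<Omega> \<Longrightarrow> \<exists>B. \<forall>h\<in>range H. \<forall>z\<in>K. cmod (h z) \<le> B"
      using Hbound by blast
  qed auto
  have csinf: "filterlim cs at_top sequentially"
    by (rule filterlim_at_top_mono[OF filterlim_real_sequentially]) (use cs(1) in auto)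
  have h1: "h (complex_of_real x) = 1" if x: "x \<in> I" for x
  proof -
    define B where "B = (\<Sum>k. pochhammer a k * x ^ k / fact k)"
    have RvB: "Rv n x \<le> B" for n unfolding Rv_def B_def using I0[OF x] by (intro Rs_upper[OF a csa(1)])
    have l0: "(\<lambda>n. ln (Rv n x) / cs n) \<longlonglongrightarrow> 0"
    proof (rule real_tendsto_sandwich[of "\<lambda>n. 0" _ _ "\<lambda>n. ln B / cs n"])
      show "\<forall>\<^sub>F n in sequentially. 0 \<le> ln (Rv n x) / cs n"
        using Rv1[OF I0(1)[OF x]] cs0 by (intro always_eventually allI divide_nonneg_pos) auto
      show "\<forall>\<^sub>F n in sequentially. ln (Rv n x) / cs n \<le> ln B / cs n"
      proof (intro always_eventually allI divide_right_mono)
        fix n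
        have "0 < Rv n x" using Rv1[OF I0(1)[OF x], of n] by simp
        then show "ln (Rv n x) \<le> ln B" using RvB[of n] by simp
      qed (use cs0 in \<open>auto intro: less_imp_le\<close>)
      show "(\<lambda>n. ln B / cs n) \<longlonglongrightarrow> 0"
        by (rule tendsto_divide_0[OF tendsto_const filterlim_at_top_imp_at_infinity[OF csinf]])
    qed simp
    have "(\<lambda>n. H n (complex_of_real x)) = (\<lambda>n. complex_of_real (exp (ln (Rv n x) / cs n)))"
      by (auto simp: H_def GI[OF x] exp_of_real simp flip: of_real_divide)
    also have "\<dots> \<longlonglongrightarrow> complex_of_real (exp 0)"
      by (intro tendsto_of_real tendsto_exp l0)
    finally have "(\<lambda>n. H n (complex_of_real x)) \<longlonglongrightarrow> 1" by simp
    from LIMSEQ_subseq_LIMSEQ[OF this r] have "(\<lambda>n. H (r n) (complex_of_real x)) \<longlonglongrightarrow> 1"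
      by (simp add: o_def)
    with lim[OF IO[OF x]] show ?thesis using LIMSEQ_unique by blast
  qed
  define p where "p = complex_of_real (1 + 2 * (\<epsilon>/4))"
  have pO: "p \<in> \<Omega>"
  proof -
    have "1 - p = complex_of_real (-(\<epsilon>/2))" by (simp add: p_def)
    then have "dist 1 p = \<epsilon>/2" using e by (simp add: dist_norm del: of_real_minus)
    then show ?thesis using e by (simp add: \<Omega>_def)
  qed
  have hp: "h p = 1"
  proof -
    have "h p - 1 = 0"
    proof (rule analytic_continuation[of "\<lambda>w. h w - 1" \<Omega> "complex_of_real ` I" "complex_of_real (1 - \<epsilon>/2)"])
      show "(\<lambda>w. h w - 1) holomorphic_on \<Omega>" by (intro holomorphic_intros holh)
      show "open \<Omega>" "connected \<Omega>" by (auto simp: \<Omega>_def)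
      show "complex_of_real ` I \<subseteq> \<Omega>" using IO by auto
      show "complex_of_real (1 - \<epsilon>/2) \<in> \<Omega>" using IO[OF Ine] by simp
      show "\<And>z. z \<in> complex_of_real ` I \<Longrightarrow> h z - 1 = 0" using h1 by auto
      show "p \<in> \<Omega>" by (rule pO)
      show "complex_of_real (1 - \<epsilon>/2) islimpt complex_of_real ` I"
        unfolding islimpt_approachable
      proof (intro allI impI)
        fix d :: real assume d: "0 < d"
        define y where "y = 1 - \<epsilon>/2 + min (d/2) (\<epsilon>/4)"
        have yI: "y \<in> I" using d e by (auto simp: y_def I_def)
        have "complex_of_real y \<noteq> complex_of_real (1 - \<epsilon>/2)" using d e by (simp add: y_def)
        moreover have "dist (complex_of_real y) (complex_of_real (1 - \<epsilon>/2)) < d"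
          using d e by (simp add: y_def dist_norm flip: of_real_diff)
        ultimately show "\<exists>x'\<in>complex_of_real ` I. x' \<noteq> complex_of_real (1 - \<epsilon>/2) \<and> dist x' (complex_of_real (1 - \<epsilon>/2)) < d"
          using yI by blast
      qed
    qed
    then show ?thesis by simp
  qed
  have Hp: "exp \<delta> \<le> norm (H n p)" for n
  proof -
    have "exp (cs n * \<delta>) \<le> Rs a (cs n) (cs n * (1 + 2 * (\<epsilon>/4)))" using cs(2)[of n] by (simp add: P_def)
    also have "\<dots> = norm (F n p)" unfolding p_def FR Rv_def
      using order_trans[OF zero_le_one Rs_ge1[OF a csa(1), of "cs n * (1 + 2 * (\<epsilon>/4))"]] cs0[of n] e by simp
    also have "\<dots> = exp (Re (G n p))" using ReG[OF pO] by simp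
    finally have "cs n * \<delta> \<le> Re (G n p)" by simp
    then have "\<delta> \<le> Re (G n p) / cs n" using cs0[of n] by (simp add: field_simps)
    then show ?thesis unfolding normH by simp
  qed
  have "exp \<delta> \<le> norm (h p)"
    by (rule LIMSEQ_le_const[OF tendsto_norm[OF lim[OF pO]]]) (use Hp in auto)
  then show False using hp \<delta> by simp
qed



theorem theorem6p1:
  fixes a :: real
  assumes "a > 0"
  shows "\<exists>zs :: real \<Rightarrow> complex.
           (\<forall>\<^sub>F c in at_top. hyp1F1 a c (zs c) = 0) \<and>
           ((\<lambda>c. zs c / complex_of_real c) \<longlongrightarrow> 1) at_top"
proof -
  define Z where "Z c = {z. hyp1F1 a c z = 0}" for c
  define d where "d c = Inf ((\<lambda>z. cmod (z / complex_of_real c - 1)) ` Z c)" for c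
  define zs where "zs c = (SOME z. z \<in> Z c \<and> cmod (z / complex_of_real c - 1) < d c + 1 / c)" for c
  have good: "zs c \<in> Z c \<and> cmod (zs c / complex_of_real c - 1) < d c + 1 / c" if "Z c \<noteq> {}" "c > 0" for c
  proof -
    have "\<exists>z \<in> Z c. cmod (z / complex_of_real c - 1) < d c + 1 / c"
    proof -
      have "Inf ((\<lambda>z. cmod (z / complex_of_real c - 1)) ` Z c) < d c + 1 / c" using that by (simp add: d_def)
      moreover have "bdd_below ((\<lambda>z. cmod (z / complex_of_real c - 1)) ` Z c)"
        by (auto intro: bdd_belowI[of _ 0])
      ultimately show ?thesis using that by (subst (asm) cInf_less_iff) auto
    qed
    then show ?thesis unfolding zs_def by (rule someI2_bex) auto
  qed
  have dle: "d c \<le> cmod (z / complex_of_real c - 1)" if "z \<in> Z c" for z c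
    unfolding d_def by (rule cInf_lower) (use that in \<open>auto intro: bdd_belowI[of _ 0]\<close>)
  have ev: "eventually (\<lambda>c. \<exists>z. hyp1F1 a c z = 0 \<and> cmod (z / complex_of_real c - 1) < \<epsilon>) at_top"
    if "0 < \<epsilon>" for \<epsilon>
  proof -
    have "eventually (\<lambda>c. \<exists>z. hyp1F1 a c z = 0 \<and> cmod (z / complex_of_real c - 1) < min \<epsilon> (1/2)) at_top"
      using that by (intro core assms) auto
    then show ?thesis by eventually_elim auto
  qed
  have "eventually (\<lambda>c. hyp1F1 a c (zs c) = 0) at_top"
    using ev[of 1, OF zero_less_one] eventually_gt_at_top[of 0]
    by eventually_elim (use good in \<open>auto simp: Z_def\<close>)
  moreover have "((\<lambda>c. zs c / complex_of_real c) \<longlongrightarrow> 1) at_top"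
  proof (rule tendstoI)
    fix \<epsilon> :: real assume e: "0 < \<epsilon>"
    have "eventually (\<lambda>c. 1 / c < \<epsilon> / 2) at_top"
      using e by real_asymp
    then show "eventually (\<lambda>c. dist (zs c / complex_of_real c) 1 < \<epsilon>) at_top"
      using ev[of "\<epsilon>/2", OF half_gt_zero[OF e]] eventually_gt_at_top[of 0]
    proof eventually_elim
      case (elim c)
      then obtain z where z: "z \<in> Z c" "cmod (z / complex_of_real c - 1) < \<epsilon>/2" by (auto simp: Z_def)
      then have "Z c \<noteq> {}" by auto
      from good[OF this elim(3)] dle[OF z(1)] z(2) elim(1)
      show ?case by (simp add: dist_norm)
    qed
  qed
  ultimately show ?thesis by blast
qed


end
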